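(* Let $X$ be a nonempty set, $f:X\to X$ a function, and $\tau_1$ the fuzzy topology on $X$ defined below. Then $f:(X,\tau_1)\to(X,\tau_1)$ is onto if and only if $f$ is an open map.
   Context: A fuzzy subset of $X$ is a function $\mu:X\to[0,1]$; union is the pointwise supremum, intersection the pointwise minimum; $\emptyset$ is the constant $0$ and $X$ the constant $1$. A fuzzy topology is a family of fuzzy subsets containing $\emptyset$ and $X$, closed under arbitrary unions and finite intersections; the topology generated by a base $\mathbb{B}$ consists of $\emptyset$ and all unions of subfamilies of $\mathbb{B}$. $\mathbb{N}=\{1,2,\dots\}$, $f^{n+1}=f^n\circ f$. Definition of $\tau_1$: for $n\in\mathbb{N}$ let $\mathcal{A}_n$ be the fuzzy subset with $\mu_{\mathcal{A}_n}(x)=1$ if there exists $m\in\mathbb{N}$ with $f^m(x)=x$, and $\mu_{\mathcal{A}_n}(x)=1/n$ otherwise; $\tau_1$ is generated by the base $\{\mathcal{A}_n:n\in\mathbb{N}\}$. The image of a fuzzy set $A$ is $\mu_{f(A)}(y)=\sup\{\mu_A(x): f(x)=y\}$, and $\mu_{f(A)}(y)=0$ if $y\notin f(X)$. $f$ is open if $f(U)$ is open for every open fuzzy set $U$. *)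

theory Defs
  imports Complex_Main
begin

text \<open>Fuzzy subsets of the ambient type are functions into the reals (values in [0,1]).\<close>
type_synonym 'a fuzzy = "'a \<Rightarrow> real"

definition fuzzy_empty :: "'a fuzzy" where
  "fuzzy_empty = (\<lambda>x. 0)"

definition fuzzy_whole :: "'a fuzzy" where
  "fuzzy_whole = (\<lambda>x. 1)"

definition fuzzy_Union :: "'a fuzzy set \<Rightarrow> 'a fuzzy" where
  "fuzzy_Union F = (\<lambda>x. if F = {} then 0 else Sup ((\<lambda>A. A x) ` F))"

definition generated_fuzzy_topology :: "'a fuzzy set \<Rightarrow> 'a fuzzy set" where
  "generated_fuzzy_topology B = insert fuzzy_empty {fuzzy_Union F | F. F \<subseteq> B}"

definition is_periodic :: "('a \<Rightarrow> 'a) \<Rightarrow> 'a \<Rightarrow> bool" where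
  "is_periodic f x \<longleftrightarrow> (\<exists>m::nat. m \<ge> 1 \<and> (f ^^ m) x = x)"

definition tau1_base_set :: "('a \<Rightarrow> 'a) \<Rightarrow> nat \<Rightarrow> 'a fuzzy" where
  "tau1_base_set f n = (\<lambda>x. if is_periodic f x then 1 else 1 / real n)"

definition tau1 :: "('a \<Rightarrow> 'a) \<Rightarrow> 'a fuzzy set" where
  "tau1 f = generated_fuzzy_topology {tau1_base_set f n | n. n \<ge> 1}"

definition fuzzy_image :: "('a \<Rightarrow> 'b) \<Rightarrow> 'a fuzzy \<Rightarrow> 'b fuzzy" where
  "fuzzy_image f A = (\<lambda>y. if y \<in> range f then Sup (A ` (f -` {y})) else 0)"

definition fuzzy_open_map :: "'a fuzzy set \<Rightarrow> 'b fuzzy set \<Rightarrow> ('a \<Rightarrow> 'b) \<Rightarrow> bool" where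
  "fuzzy_open_map T S f \<longleftrightarrow> (\<forall>U \<in> T. fuzzy_image f U \<in> S)"

end

theory Submission
  imports Defs
begin

lemma per_f: "is_periodic f p \<Longrightarrow> is_periodic f (f p)"
  unfolding is_periodic_def by (metis funpow_swap1)

lemma per_pre: assumes "is_periodic f y" shows "\<exists>z. is_periodic f z \<and> f z = y"
proof -
  obtain m where m: "m \<ge> 1" "(f ^^ m) y = y" using assms unfolding is_periodic_def by auto
  then obtain k where k: "m = Suc k" by (cases m) auto
  define z where "z = (f ^^ k) y"
  have "f z = y" using m k unfolding z_def by (metis funpow_Suc_right funpow_swap1 comp_apply)
  moreover have "(f ^^ m) z = z" unfolding z_def
    by (metis m(2) funpow_add add.commute comp_apply)
  ultimately show ?thesis using m(1) unfolding is_periodic_def by blast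
qed

definition Q :: "('a \<Rightarrow> 'a) \<Rightarrow> 'a fuzzy \<Rightarrow> bool" where
  "Q f U \<longleftrightarrow> (\<forall>x y. is_periodic f x = is_periodic f y \<longrightarrow> U x = U y) \<and>
     (\<forall>x p. is_periodic f p \<longrightarrow> U x \<le> U p)"

lemma base_le1: "n \<ge> 1 \<Longrightarrow> tau1_base_set f n x \<le> 1"
  unfolding tau1_base_set_def by auto

lemma base_pos: "n \<ge> 1 \<Longrightarrow> tau1_base_set f n x > 0"
  unfolding tau1_base_set_def by auto

lemma tau1_cases:
  assumes "U \<in> tau1 f"
  shows "U = fuzzy_empty \<or> (\<exists>F. F \<noteq> {} \<and> F \<subseteq> {tau1_base_set f n | n. n \<ge> 1} \<and> U = fuzzy_Union F)"
proof -
  from assms have "U = fuzzy_empty \<or> (\<exists>F. F \<subseteq> {tau1_base_set f n | n. n \<ge> 1} \<and> U = fuzzy_Union F)"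
    unfolding tau1_def generated_fuzzy_topology_def by blast
  moreover have "fuzzy_Union {} = fuzzy_empty" by (simp add: fuzzy_Union_def fuzzy_empty_def)
  ultimately show ?thesis
  proof (elim disjE exE conjE)
    fix F assume F: "F \<subseteq> {tau1_base_set f n | n. n \<ge> 1}" "U = fuzzy_Union F"
    show ?thesis
    proof (cases "F = {}")
      case True thus ?thesis using F \<open>fuzzy_Union {} = fuzzy_empty\<close> by blast
    next
      case False thus ?thesis using F by blast
    qed
  qed simp
qed

lemma tau1_Q:
  assumes "U \<in> tau1 f" shows "Q f U"
  using tau1_cases[OF assms]
proof
  assume "U = fuzzy_empty" thus ?thesis by (simp add: Q_def fuzzy_empty_def)
next
  assume "\<exists>F. F \<noteq> {} \<and> F \<subseteq> {tau1_base_set f n | n. n \<ge> 1} \<and> U = fuzzy_Union F"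
  then obtain F where F: "F \<noteq> {}" "F \<subseteq> {tau1_base_set f n | n. n \<ge> 1}" "U = fuzzy_Union F" by blast
  have bdd: "bdd_above ((\<lambda>A. A x) ` F)" for x
    proof (rule bdd_aboveI2[where M=1])
    fix A assume "A \<in> F"
    then obtain n where "n \<ge> 1" "A = tau1_base_set f n" using F(2) by blast
    thus "A x \<le> 1" using base_le1 by simp
  qed
  have eq: "(\<lambda>A. A x) ` F = (\<lambda>A. A y) ` F" if "is_periodic f x = is_periodic f y" for x y
  proof -
    have "A x = A y" if "A \<in> F" for A
      using F(2) that \<open>is_periodic f x = is_periodic f y\<close> by (auto simp: tau1_base_set_def)
    thus ?thesis by (rule image_cong[OF refl])
  qed
  have le: "U x \<le> U p" if "is_periodic f p" for x p
  proof -
    have "A x \<le> A p" if "A \<in> F" for A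
      using F(2) that \<open>is_periodic f p\<close> by (auto simp: tau1_base_set_def)
    hence "Sup ((\<lambda>A. A x) ` F) \<le> Sup ((\<lambda>A. A p) ` F)"
      using F(1) bdd by (meson cSUP_mono)
    thus ?thesis using F by (simp add: fuzzy_Union_def)
  qed
  show ?thesis unfolding Q_def
  proof (intro conjI allI impI)
    fix x y assume "is_periodic f x = is_periodic f y"
    thus "U x = U y" using eq[of x y] F(1) F(3) by (simp add: fuzzy_Union_def)
  next
    fix x p assume "is_periodic f p"
    thus "U x \<le> U p" by (rule le)
  qed
qed

lemma tau1_pos:
  assumes "U \<in> tau1 f" "U \<noteq> fuzzy_empty" shows "U x > 0"
proof -
  obtain F where F: "F \<noteq> {}" "F \<subseteq> {tau1_base_set f n | n. n \<ge> 1}" "U = fuzzy_Union F"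
    using tau1_cases[OF assms(1)] assms(2) by blast
  have bdd: "bdd_above ((\<lambda>A. A x) ` F)"
    proof (rule bdd_aboveI2[where M=1])
    fix A assume "A \<in> F"
    then obtain n where "n \<ge> 1" "A = tau1_base_set f n" using F(2) by blast
    thus "A x \<le> 1" using base_le1 by simp
  qed
  obtain A where A: "A \<in> F" using F(1) by blast
  obtain n where "n \<ge> 1" "A = tau1_base_set f n" using A F(2) by blast
  hence "A x > 0" using base_pos by simp
  also have "A x \<le> Sup ((\<lambda>A. A x) ` F)" using A bdd by (meson cSUP_upper)
  finally show ?thesis using F by (simp add: fuzzy_Union_def)
qed

lemma image_Q:
  assumes "surj f" "Q f U" shows "fuzzy_image f U = U"
proof
  fix y
  have Q1: "U a = U b" if "is_periodic f a = is_periodic f b" for a b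
    using assms(2) that unfolding Q_def by blast
  have Q2: "U a \<le> U b" if "is_periodic f b" for a b
    using assms(2) that unfolding Q_def by blast
  obtain x0 where x0: "y = f x0" using assms(1) by (metis surjD)
  have S: "U x0 \<in> U ` (f -` {y})" using x0 by simp
  show "fuzzy_image f U y = U y"
  proof (cases "is_periodic f y")
    case True
    obtain z where z: "is_periodic f z" "f z = y" using per_pre[OF True] by blast
    have "U z = U y" using z(1) True by (intro Q1) simp
    moreover have "z \<in> f -` {y}" using z by simp
    moreover have "\<forall>w \<in> U ` (f -` {y}). w \<le> U y" using Q2[OF True] by simp
    ultimately have "Sup (U ` (f -` {y})) = U y"
      by (metis cSup_eq_maximum imageI)
    thus ?thesis using assms(1) by (simp add: fuzzy_image_def)
  next
    case False
    have np: "\<not> is_periodic f x" if "x \<in> f -` {y}" for x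
      using False per_f[of f x] that by auto
    have "U ` (f -` {y}) = {U y}"
    proof
      have "U x = U y" if "x \<in> f -` {y}" for x using np[OF that] False by (intro Q1) simp
      thus "U ` (f -` {y}) \<subseteq> {U y}" by blast
      have "U x0 = U y" using np[of x0] x0 False by (intro Q1) simp
      thus "{U y} \<subseteq> U ` (f -` {y})" using S by simp
    qed
    thus ?thesis using assms(1) by (simp add: fuzzy_image_def)
  qed
qed

theorem theorem2p7:
  fixes f :: "'a \<Rightarrow> 'a"
  shows "surj f \<longleftrightarrow> fuzzy_open_map (tau1 f) (tau1 f) f"
proof
  assume "surj f"
  thus "fuzzy_open_map (tau1 f) (tau1 f) f"
    unfolding fuzzy_open_map_def
  proof (intro ballI)
    fix U assume "U \<in> tau1 f"
    thus "fuzzy_image f U \<in> tau1 f" using image_Q[OF \<open>surj f\<close> tau1_Q] by simp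
  qed
next
  assume om: "fuzzy_open_map (tau1 f) (tau1 f) f"
  show "surj f"
  proof (rule ccontr)
    assume "\<not> surj f"
    then obtain y where y: "y \<notin> range f" by auto
    have b1: "tau1_base_set f 1 = (\<lambda>x. 1)" by (simp add: tau1_base_set_def fun_eq_iff)
    have "tau1_base_set f 1 \<in> tau1 f"
      unfolding tau1_def generated_fuzzy_topology_def
    proof (rule insertI2, rule CollectI, intro exI conjI)
      show "tau1_base_set f 1 = fuzzy_Union {tau1_base_set f 1}"
        by (simp add: fuzzy_Union_def fun_eq_iff)
    qed auto
    hence I: "fuzzy_image f (\<lambda>x. 1) \<in> tau1 f" using om b1 unfolding fuzzy_open_map_def by metis
    obtain x :: 'a where True by blast
    have "(\<lambda>_. 1::real) ` (f -` {f x}) = {1}" by auto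
    hence "fuzzy_image f (\<lambda>x. 1) (f x) = 1" by (simp add: fuzzy_image_def)
    hence "fuzzy_image f (\<lambda>x. 1) \<noteq> fuzzy_empty" unfolding fuzzy_empty_def by (metis zero_neq_one)
    from tau1_pos[OF I this] have "fuzzy_image f (\<lambda>x. 1) y > 0" .
    thus False using y by (simp add: fuzzy_image_def)
  qed
qed

end
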